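(* Let $n\ge0$. For every $m\ge0$, the $m$-generators of the polygraph freely generating $\mathcal O_n$ (obtained by iterating the free-expansion construction from the empty polygraph) are exactly the cells $\langle i_0,\dots,i_m\rangle$ with $0\le i_0<i_1<\cdots<i_m\le n$, and these are pairwise distinct; hence the $m$-generators of $\mathcal O_n$ are in canonical bijection with the injective order-preserving maps $[m]\to[n]$. Moreover, if $0\le i_0\le\cdots\le i_m\le n$ is nondecreasing but not strictly increasing, then $\langle i_0,\dots,i_m\rangle$ is an identity cell; for instance $\langle 0,0,i_2,\dots,i_m\rangle=1_{\langle 0,i_2,\dots,i_m\rangle}$.
   Context: All $\omega$-categories are strict and globular. An expansion on an $\omega$-category $C$ consists of a $0$-cell $o$ and, for each $n$-cell $x$, an $(n+1)$-cell $\xi_x$ with $\xi_x:o\to x$ if $n=0$ and $\xi_x:\xi_{t(x)}\to x\star_0\xi_{s_0(x)}\star_1\cdots\star_{n-1}\xi_{s_{n-1}(x)}$ if $n>0$ (with $s_i,t_i$ iterated sources/targets, $\star_p$ the $p$-composition, lower-dimensional cells standing for iterated identities, composites bracketed giving priority to the lowest-dimensional composition), satisfying $\xi_{y\star_p x}=t_{p+1}(y)\star_0\xi_{s_0(x)}\star_1\cdots\star_{p-1}\xi_{s_{p-1}(x)}\star_p\xi_x\star_{p+1}\xi_y$, $\xi_{1_u}=1_{\xi_u}$, $\xi_{\xi_u}=1_{\xi_u}$, $\xi_o=1_o$. $T=UF$ is the monad on $\omega\mathbf{Cat}$ induced by the forgetful functor $U$ from $\omega$-categories with expansion (morphisms preserving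 $o$ and $\xi$) and its left adjoint $F$; $\eta$ is its unit. $\mathcal O_k=T^{k+1}(\emptyset)$ for $k\ge-1$ ($\mathcal O_{-1}=\emptyset$), with origin $o_k$ and expansion $\xi$ of $\mathcal O_k=T(\mathcal O_{k-1})$ for $k\ge0$; $\eta^i:\mathcal O_{k}\to\mathcal O_{k+i}$ denotes the composite of units $\eta_{\mathcal O_{k+i-1}}\circ\cdots\circ\eta_{\mathcal O_k}$. For a polygraph $S$, $T(S^* )$ is freely generated by the polygraph with $n$-generators $\eta(a)$ ($a\in S_n$), together with the origin if $n=0$ and $\xi_{\eta(a)}$ ($a\in S_{n-1}$) if $n\ge1$; iterating from the empty polygraph gives the polygraph freely generating $\mathcal O_n$. Simplicial notation: for $0\le i_0\le\cdots\le i_m\le n$, the cell $\langle i_0,\dots,i_m\rangle$ of $\mathcal O_n$ is defined by induction on $m$: $\langle i\rangle=\eta^{i}(o_{n-i})$, and for $m\ge1$, $\langle i_0,\dots,i_m\rangle=\eta^{i_0}\big(\xi_{\langle i_1-i_0,\dots,i_m-i_0\rangle}\big)$ where $\langle i_1-i_0,\dots,i_m-i_0\rangle$ is the cell so defined in $\mathcal O_{n-i_0}$ and $\xi$ is the expansion of $\mathcal O_{n-i_0}$. *)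

theory Defs
  imports Main "HOL-Library.FuncSet"
begin

text \<open>All the omega-categories O_k = T^(k+1)(empty) are presented as term models
(free strict globular omega-category with expansion on the previous one).
A term of level k is built from: Bs t (the unit eta applied to a cell t of
O_(k-1)), Or (the origin o_k), Xi t (the expansion xi_t), Cmp p y x
(the p-composite y *_p x of two cells of equal dimension) and Idt t
(the identity 1_t).\<close>

datatype tm = Bs tm | Or | Xi tm | Cmp nat tm tm | Idt tm

fun dim :: "tm \<Rightarrow> nat" where
  "dim (Bs t) = dim t"
| "dim Or = 0"
| "dim (Xi t) = Suc (dim t)"
| "dim (Cmp p y x) = dim x"
| "dim (Idt t) = Suc (dim t)"

definition lift :: "nat \<Rightarrow> tm \<Rightarrow> tm" where
  "lift j t = (Idt ^^ j) t"

definition cmp :: "nat \<Rightarrow> tm \<Rightarrow> tm \<Rightarrow> tm" where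
  "cmp p y x = (let d = max (dim x) (dim y) in Cmp p (lift (d - dim y) y) (lift (d - dim x) x))"

text \<open>sk True k t is the iterated k-source s_k(t), sk False k t the iterated
k-target t_k(t) (equal to t when k is at least the dimension of t).
For the expansion, t_k(xi_x) = t_k x *_0 xi_(s_0 ..) *_1 ... *_(k-1) xi_(s_(k-1) ..),
bracketed to the left (lowest composition first).\<close>
function sk :: "bool \<Rightarrow> nat \<Rightarrow> tm \<Rightarrow> tm" where
  "sk b k (Bs t) = Bs (sk b k t)"
| "sk b k Or = Or"
| "sk b k (Idt x) = (if Suc (dim x) \<le> k then Idt x else if k = dim x then x else sk b k x)"
| "sk b k (Cmp p y x) = (if dim x \<le> k then Cmp p y x
      else if k \<le> p then (if b then sk b k x else sk b k y)
      else Cmp p (sk b k y) (sk b k x))"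
| "sk b k (Xi x) = (if Suc (dim x) \<le> k then Xi x
      else if b then (if k = 0 then Or else Xi (sk False (k - 1) x))
      else (let z = sk False k x in
              foldl (\<lambda>acc (i, c). cmp i acc c) z
                 (zip [0..<k] (map (\<lambda>i. Xi (sk True i z)) [0..<k]))))"
  by pat_completeness auto
termination
  by (relation "measures [\<lambda>(b, k, t). k, \<lambda>(b, k, t). size t]") auto

text \<open>The expansion target x *_0 xi_(s_0 x) *_1 ... *_(n-1) xi_(s_(n-1) x) of xi_x.\<close>
definition Wx :: "tm \<Rightarrow> tm" where
  "Wx x = foldl (\<lambda>acc (i, c). cmp i acc c) x
            (zip [0..<dim x] (map (\<lambda>i. Xi (sk True i x)) [0..<dim x]))"

text \<open>Right-hand side of the axiom for xi_(y *_p x):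
t_(p+1)(y) *_0 xi_(s_0 x) *_1 ... *_(p-1) xi_(s_(p-1) x) *_p xi_x *_(p+1) xi_y.\<close>
definition XiCmpRhs :: "nat \<Rightarrow> tm \<Rightarrow> tm \<Rightarrow> tm" where
  "XiCmpRhs p y x =
     cmp (Suc p)
       (cmp p (foldl (\<lambda>acc (i, c). cmp i acc c) (sk False (Suc p) y)
                 (zip [0..<p] (map (\<lambda>i. Xi (sk True i x)) [0..<p])))
          (Xi x))
       (Xi y)"

text \<open>Well-formedness and equality of cells of T(C), where C is given by
well-formedness bw and equality be on base terms (C is again a term model).\<close>
inductive wfT and eqT for bw :: "tm \<Rightarrow> bool" and be :: "tm \<Rightarrow> tm \<Rightarrow> bool" where
  wf_Bs: "bw x \<Longrightarrow> wfT bw be (Bs x)"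
| wf_Or: "wfT bw be Or"
| wf_Xi: "wfT bw be x \<Longrightarrow> wfT bw be (Xi x)"
| wf_Idt: "wfT bw be x \<Longrightarrow> wfT bw be (Idt x)"
| wf_Cmp: "wfT bw be x \<Longrightarrow> wfT bw be y \<Longrightarrow> dim x = dim y \<Longrightarrow> p < dim x \<Longrightarrow>
     eqT bw be (sk False p x) (sk True p y) \<Longrightarrow> wfT bw be (Cmp p y x)"
| wf_sk: "wfT bw be t \<Longrightarrow> wfT bw be (sk b k t)"
| eq_refl: "wfT bw be t \<Longrightarrow> eqT bw be t t"
| eq_sym: "eqT bw be t u \<Longrightarrow> eqT bw be u t"
| eq_trans: "eqT bw be t u \<Longrightarrow> eqT bw be u v \<Longrightarrow> eqT bw be t v"
| eq_Bs: "be x y \<Longrightarrow> eqT bw be (Bs x) (Bs y)"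
| eq_Xi: "eqT bw be x y \<Longrightarrow> eqT bw be (Xi x) (Xi y)"
| eq_Idt: "eqT bw be x y \<Longrightarrow> eqT bw be (Idt x) (Idt y)"
| eq_Cmp: "eqT bw be x x' \<Longrightarrow> eqT bw be y y' \<Longrightarrow> wfT bw be (Cmp p y x) \<Longrightarrow>
     wfT bw be (Cmp p y' x') \<Longrightarrow> eqT bw be (Cmp p y x) (Cmp p y' x')"
| eq_sk: "eqT bw be t u \<Longrightarrow> eqT bw be (sk b k t) (sk b k u)"
  \<comment> \<open>eta is an omega-functor\<close>
| eta_Cmp: "bw (Cmp p y x) \<Longrightarrow> wfT bw be (Cmp p (Bs y) (Bs x)) \<Longrightarrow>
     eqT bw be (Bs (Cmp p y x)) (Cmp p (Bs y) (Bs x))"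
| eta_Idt: "bw (Idt x) \<Longrightarrow> eqT bw be (Bs (Idt x)) (Idt (Bs x))"
| assoc: "wfT bw be (Cmp p (Cmp p z y) x) \<Longrightarrow> wfT bw be (Cmp p z (Cmp p y x)) \<Longrightarrow>
     eqT bw be (Cmp p (Cmp p z y) x) (Cmp p z (Cmp p y x))"
| unit_l: "wfT bw be (Cmp p (lift (dim x - p) (sk False p x)) x) \<Longrightarrow>
     eqT bw be (Cmp p (lift (dim x - p) (sk False p x)) x) x"
| unit_r: "wfT bw be (Cmp p x (lift (dim x - p) (sk True p x))) \<Longrightarrow>
     eqT bw be (Cmp p x (lift (dim x - p) (sk True p x))) x"
| interchange: "q < p \<Longrightarrow> wfT bw be (Cmp q (Cmp p y' y) (Cmp p x' x)) \<Longrightarrow>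
     wfT bw be (Cmp p (Cmp q y' x') (Cmp q y x)) \<Longrightarrow>
     eqT bw be (Cmp q (Cmp p y' y) (Cmp p x' x)) (Cmp p (Cmp q y' x') (Cmp q y x))"
| id_cmp: "wfT bw be (Cmp p (Idt y) (Idt x)) \<Longrightarrow> wfT bw be (Idt (Cmp p y x)) \<Longrightarrow>
     eqT bw be (Cmp p (Idt y) (Idt x)) (Idt (Cmp p y x))"
| xi_cmp: "wfT bw be (Cmp p y x) \<Longrightarrow> wfT bw be (XiCmpRhs p y x) \<Longrightarrow>
     eqT bw be (Xi (Cmp p y x)) (XiCmpRhs p y x)"
| xi_id: "wfT bw be u \<Longrightarrow> eqT bw be (Xi (Idt u)) (Idt (Xi u))"
| xi_xi: "wfT bw be u \<Longrightarrow> eqT bw be (Xi (Xi u)) (Idt (Xi u))"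
| xi_or: "eqT bw be (Xi Or) (Idt Or)"

text \<open>The term models of O_k, k \<ge> 0 (O_(-1) is empty).\<close>
fun lev :: "nat \<Rightarrow> (tm \<Rightarrow> bool) \<times> (tm \<Rightarrow> tm \<Rightarrow> bool)" where
  "lev 0 = (wfT (\<lambda>_. False) (\<lambda>_ _. False), eqT (\<lambda>_. False) (\<lambda>_ _. False))"
| "lev (Suc k) = (wfT (fst (lev k)) (snd (lev k)), eqT (fst (lev k)) (snd (lev k)))"

definition wfO :: "nat \<Rightarrow> tm \<Rightarrow> bool" where "wfO k = fst (lev k)"
definition eqO :: "nat \<Rightarrow> tm \<Rightarrow> tm \<Rightarrow> bool" where "eqO k = snd (lev k)"

definition cellO :: "nat \<Rightarrow> tm \<Rightarrow> tm set" where "cellO k t = {u. eqO k t u}"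

fun Gen :: "nat \<Rightarrow> nat \<Rightarrow> tm set" where
  "Gen 0 m = (if m = 0 then {Or} else {})"
| "Gen (Suc k) m = Bs ` Gen k m \<union> (if m = 0 then {Or} else Xi ` Bs ` Gen k (m - 1))"

text \<open>Simplicial notation: sc [i0,...,im] = <i0,...,im>, i.e.
<i> = eta^i(o) and <i0,...,im> = eta^i0(xi_<i1-i0,...,im-i0>).\<close>
function sc :: "nat list \<Rightarrow> tm" where
  "sc [] = Or"
| "sc [i] = (Bs ^^ i) Or"
| "sc (i # j # r) = (Bs ^^ i) (Xi (sc (map (\<lambda>l. l - i) (j # r))))"
  by pat_completeness auto
termination by (relation "measure length") auto

definition SI :: "nat \<Rightarrow> nat \<Rightarrow> nat list set" where
  "SI n m = {is. length is = Suc m \<and> sorted_wrt (<) is \<and> (\<forall>i\<in>set is. i \<le> n)}"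

end

theory Submission
  imports Defs
begin

fun Vt :: "tm \<Rightarrow> nat set" where
  "Vt (Bs t) = Suc ` Vt t"
| "Vt Or = {0}"
| "Vt (Xi x) = insert 0 (Vt x)"
| "Vt (Cmp p y x) = Vt y \<union> Vt x"
| "Vt (Idt x) = Vt x"

fun Fc :: "bool \<Rightarrow> nat \<Rightarrow> tm \<Rightarrow> nat set" where
  "Fc b k (Bs t) = Suc ` Fc b k t"
| "Fc b k Or = {0}"
| "Fc b k (Idt x) = (if dim x \<le> k then Vt x else Fc b k x)"
| "Fc b k (Cmp p y x) = (if dim x \<le> k then Vt y \<union> Vt x
      else if k \<le> p then (if b then Fc b k x else Fc b k y) else Fc b k y \<union> Fc b k x)"
| "Fc b k (Xi x) = (if Suc (dim x) \<le> k then insert 0 (Vt x)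
      else if b then (if k = 0 then {0} else insert 0 (Fc False (k - 1) x))
      else (if k = 0 then Fc False 0 x else insert 0 (Fc False k x \<union> (\<Union>i<k. Fc True i x))))"

fun good :: "tm \<Rightarrow> bool" where
  "good (Bs t) = good t"
| "good Or = True"
| "good (Xi x) = good x"
| "good (Idt x) = good x"
| "good (Cmp p y x) = (good x \<and> good y \<and> dim y = dim x \<and> p < dim x
     \<and> (\<forall>b k. k < p \<longrightarrow> Fc b k y = Fc b k x) \<and> Fc False p x = Fc True p y)"

definition same :: "tm \<Rightarrow> tm \<Rightarrow> bool" where
  "same t u = (dim t = dim u \<and> Vt t = Vt u \<and> (\<forall>b k. Fc b k t = Fc b k u))"

lemma Fc_ge: "dim t \<le> k \<Longrightarrow> Fc b k t = Vt t"
  by (induction t arbitrary: b k) auto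

lemma Fc_Idt[simp]: "Fc b k (Idt x) = Fc b k x"
  using Fc_ge by auto
declare Fc.simps(3)[simp del]

lemma lift_simps[simp]: "dim (lift j t) = j + dim t" "Vt (lift j t) = Vt t"
  "Fc b k (lift j t) = Fc b k t" "good (lift j t) = good t"
  by (induction j) (simp_all add: lift_def)

lemma lift0[simp]: "lift 0 t = t" by (simp add: lift_def)

lemma nest: "good t \<Longrightarrow> Fc b k t \<subseteq> Vt t \<and> (k < k' \<longrightarrow> Fc b k t \<subseteq> Fc b' k' t)"
proof (induction t arbitrary: b k b' k')
  case (Bs t) then show ?case by (simp add: image_mono)
next
  case Or then show ?case by simp
next
  case (Xi x)
  then have IH: "\<And>b k. Fc b k x \<subseteq> Vt x" "\<And>b k b' k'. k < k' \<Longrightarrow> Fc b k x \<subseteq> Fc b' k' x" by auto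
  have IH2: "\<And>b k k'. k \<le> k' \<Longrightarrow> Fc b k x \<subseteq> Fc b k' x"
    using IH(2) by (metis order_le_less)
  have U: "(\<Union>i<k. Fc True i x) \<subseteq> Vt x" for k using IH(1) by blast
  have U2: "(\<Union>i<k. Fc True i x) \<subseteq> Fc b' k' x" if "k \<le> k'" for k k' b'
    using IH(2) that by (meson UN_least lessThan_iff order_less_le_trans)
  have P1: "Fc b k (Xi x) \<subseteq> Vt (Xi x)"
    using IH(1) U by auto
  have P2: "Fc b k (Xi x) \<subseteq> Fc b' k' (Xi x)" if kk: "k < k'"
  proof (cases "Suc (dim x) \<le> k'")
    case True then show ?thesis using P1 by (simp del: Fc.simps add: Fc_ge)
  next
    case F: False
    then have nk: "\<not> Suc (dim x) \<le> k" using kk by simp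
    have a1: "Fc False (k-1) x \<subseteq> Fc False (k'-1) x" using IH2 kk by simp
    have a2: "Fc False (k-1) x \<subseteq> Fc False k' x" using IH2 kk by simp
    have a3: "Fc False k x \<subseteq> Fc False (k'-1) x" using IH2 kk by simp
    have a4: "Fc False 0 x \<subseteq> Fc False (k'-1) x" using IH2 kk by simp
    have a5: "(\<Union>i<k. Fc True i x) \<subseteq> Fc False (k'-1) x" using U2 kk by simp
    have a6: "Fc False k x \<subseteq> Fc False k' x" using IH2 kk by simp
    have a7: "Fc False 0 x \<subseteq> Fc False k' x" using IH2 kk by simp
    have a8: "(\<Union>i<k. Fc True i x) \<subseteq> (\<Union>i<k'. Fc True i x)" using kk by (intro UN_mono) auto
    have e1: "Fc b k (Xi x) = (if b then (if k = 0 then {0} else insert 0 (Fc False (k-1) x)) else (if k = 0 then Fc False 0 x else insert 0 (Fc False k x \<union> (\<Union>i<k. Fc True i x))))" using nk by simp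
    have e2: "Fc b' k' (Xi x) = (if b' then insert 0 (Fc False (k'-1) x) else insert 0 (Fc False k' x \<union> (\<Union>i<k'. Fc True i x)))" using F kk by simp
    show ?thesis
    proof (cases b)
      case True
      show ?thesis
      proof (cases b')
        case True
        with \<open>b\<close> show ?thesis unfolding e1 e2 using a1 by (cases "k = 0") auto
      next
        case False
        with \<open>b\<close> show ?thesis unfolding e1 e2 using a2 by (cases "k = 0") auto
      qed
    next
      case False
      show ?thesis
      proof (cases b')
        case True
        with \<open>\<not>b\<close> show ?thesis unfolding e1 e2 using a3 a4 a5 by (cases "k = 0") auto
      next
        case False
        with \<open>\<not>b\<close> show ?thesis unfolding e1 e2 using a6 a7 a8 by (cases "k = 0") auto
      qed
    qed
  qed
  show ?case using P1 P2 by blast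
next
  case (Cmp p y x)
  then have G: "good x" "good y" "dim y = dim x" "p < dim x" "\<And>b k. k < p \<Longrightarrow> Fc b k y = Fc b k x"
    "Fc False p x = Fc True p y" by auto
  have IHx: "\<And>b k. Fc b k x \<subseteq> Vt x" "\<And>b k b' k'. k < k' \<Longrightarrow> Fc b k x \<subseteq> Fc b' k' x"
    using Cmp.IH(2)[OF G(1)] by auto
  have IHy: "\<And>b k. Fc b k y \<subseteq> Vt y" "\<And>b k b' k'. k < k' \<Longrightarrow> Fc b k y \<subseteq> Fc b' k' y"
    using Cmp.IH(1)[OF G(2)] by auto
  have P1: "Fc b k (Cmp p y x) \<subseteq> Vt (Cmp p y x)"
    using IHx(1)[of b k] IHy(1)[of b k] by auto
  have P2: "Fc b k (Cmp p y x) \<subseteq> Fc b' k' (Cmp p y x)" if kk: "k < k'"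
  proof (cases "dim x \<le> k'")
    case True then show ?thesis using P1 by (simp del: Fc.simps add: Fc_ge)
  next
    case F: False
    then have nk: "\<not> dim x \<le> k" using kk by simp
    show ?thesis
    proof (cases "k' \<le> p")
      case True
      then show ?thesis using nk F kk IHx(2)[of k k' b b'] IHy(2)[of k k' b b'] G(5)[of k] G(5)[of k']
        by (cases b; cases b'; auto)
    next
      case False
      then show ?thesis using nk F kk IHx(2)[of k k' b b'] IHy(2)[of k k' b b'] G(5)[of k]
        by (cases b; cases b'; auto)
    qed
  qed
  show ?case using P1 P2 by blast
next
  case (Idt x) then show ?case by simp
qed


lemma cmp_le: "dim x \<le> dim y \<Longrightarrow> cmp p y x = Cmp p y (lift (dim y - dim x) x)"
  by (simp add: cmp_def max_def)

definition accF :: "tm \<Rightarrow> tm \<Rightarrow> nat \<Rightarrow> tm" where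
  "accF z w j = foldl (\<lambda>acc (i, c). cmp i acc c) z (zip [0..<j] (map (\<lambda>i. Xi (sk True i w)) [0..<j]))"

lemma accF_0[simp]: "accF z w 0 = z" by (simp add: accF_def)
lemma accF_Suc: "accF z w (Suc j) = cmp j (accF z w j) (Xi (sk True j w))"
  by (simp add: accF_def)

definition skok :: "bool \<Rightarrow> nat \<Rightarrow> tm \<Rightarrow> bool" where
  "skok b k t = (good (sk b k t) \<and> dim (sk b k t) = min k (dim t) \<and> Vt (sk b k t) = Fc b k t
     \<and> (\<forall>b' k'. Fc b' k' (sk b k t) = (if k' < min k (dim t) then Fc b' k' t else Fc b k t)))"

definition FA :: "tm \<Rightarrow> tm \<Rightarrow> nat \<Rightarrow> nat \<Rightarrow> bool \<Rightarrow> nat \<Rightarrow> nat set" where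
  "FA z w d j b k = (if d \<le> k then Vt z \<union> (\<Union>l<j. insert 0 (Fc True l w))
     else if b then (if k < j then (if k = 0 then {0} else insert 0 (Fc False (k-1) w))
                     else Fc True k z \<union> (\<Union>l<j. insert 0 (Fc True l w)))
     else Fc False k z \<union> (\<Union>l<min j k. insert 0 (Fc True l w)))"

lemma fold_lemma:
  assumes "good z" "good w" "dim z = d" "j \<le> d" "j \<le> dim w" "\<forall>l<j. skok True l w"
    "\<forall>b k. k < j \<longrightarrow> Fc b k z = Fc b k w"
  shows "good (accF z w j) \<and> dim (accF z w j) = d \<and> Vt (accF z w j) = Vt z \<union> (\<Union>l<j. insert 0 (Fc True l w))
     \<and> (\<forall>b k. Fc b k (accF z w j) = FA z w d j b k)"
  using assms
proof (induction j)
  case 0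
  then show ?case by (auto simp: FA_def Fc_ge)
next
  case (Suc j)
  have IH: "good (accF z w j)" "dim (accF z w j) = d" "Vt (accF z w j) = Vt z \<union> (\<Union>l<j. insert 0 (Fc True l w))"
     "\<And>b k. Fc b k (accF z w j) = FA z w d j b k"
    using Suc by auto
  define s where "s = sk True j w"
  have sk: "good s" "dim s = j" "Vt s = Fc True j w" "\<And>b' k'. Fc b' k' s = (if k' < j then Fc b' k' w else Fc True j w)"
    using Suc.prems(6,5) unfolding skok_def s_def by auto
  define c where "c = lift (d - Suc j) (Xi s)"
  have eq: "accF z w (Suc j) = Cmp j (accF z w j) c"
    unfolding accF_Suc c_def s_def using IH(2) sk(2) Suc.prems(4) cmp_le[of "Xi s" "accF z w j" j] s_def by simp
  have c: "good c" "dim c = d" "Vt c = insert 0 (Fc True j w)"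
    "\<And>b k. Fc b k c = (if Suc j \<le> k then insert 0 (Fc True j w) else if b then (if k = 0 then {0} else insert 0 (Fc False (k-1) w))
       else (if k = 0 then (if j = 0 then Fc True 0 w else Fc False 0 w) else insert 0 ((if k < j then Fc False k w else Fc True j w) \<union> (\<Union>i<k. Fc True i w))))"
    unfolding c_def using sk Suc.prems(4) by auto
  have zw: "\<And>b k. k \<le> j \<Longrightarrow> Fc b k z = Fc b k w" using Suc.prems(7) by auto
  have jd: "j < d" using Suc.prems(4) by simp
  have UNn: "(\<Union>l<k. insert (0::nat) (f l)) = (if k = 0 then {} else insert 0 (\<Union>l<k. f l))" for k and f :: "nat \<Rightarrow> nat set"
    by auto
  have f1: "Fc b k c = Fc b k (accF z w j)" if "k < j" for b k
    using that zw[of k] unfolding IH(4) c(4) FA_def using jd by (auto simp: UNn min_def)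
  have f2: "Fc False j c = Fc True j (accF z w j)"
    unfolding IH(4) c(4) FA_def using jd zw[of j] by (auto simp: UNn)
  have g: "good (Cmp j (accF z w j) c)"
    using IH(1,2) c(1,2) jd f1 f2 by auto
  have v: "Vt (Cmp j (accF z w j) c) = Vt z \<union> (\<Union>l<Suc j. insert 0 (Fc True l w))"
    using IH(3) c(3) by (auto simp: lessThan_Suc)
  have F: "Fc b k (Cmp j (accF z w j) c) = FA z w d (Suc j) b k" for b k
  proof -
    have e: "Fc b k (Cmp j (accF z w j) c) = (if d \<le> k then Vt (accF z w j) \<union> Vt c else if k \<le> j then (if b then Fc b k c else Fc b k (accF z w j)) else Fc b k (accF z w j) \<union> Fc b k c)"
      using c(2) by simp
    consider "d \<le> k" | "k < j" | "k = j" | "j < k" "k < d" by linarith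
    then show ?thesis
    proof cases
      case 1 then show ?thesis using v e by (simp add: FA_def)
    next
      case 2 then show ?thesis using jd zw[of k] unfolding e IH(4) c(4) FA_def
        by (cases b) (auto simp: UNn min_def)
    next
      case 3 then show ?thesis using jd zw[of k] unfolding e IH(4) c(4) FA_def
        by (cases b) (auto simp: UNn min_def lessThan_Suc)
    next
      case 4 then show ?thesis using jd unfolding e IH(4) c(4) FA_def
        by (cases b) (auto simp: UNn min_def lessThan_Suc)
    qed
  qed
  show ?case unfolding eq using g v F IH(2) by simp
qed


lemma skok_triv: "dim t \<le> k \<Longrightarrow> good t \<Longrightarrow> sk b k t = t \<Longrightarrow> skok b k t"
  unfolding skok_def by (auto simp: Fc_ge min_def)

lemma sk_ge: "dim t \<le> k \<Longrightarrow> sk b k t = t"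
  by (induction t arbitrary: b) auto

lemma L1: "good t \<Longrightarrow> skok b k t"
proof (induction k arbitrary: t b rule: less_induct)
  case (less k)
  show ?case using less.prems
  proof (induction t arbitrary: b)
    case (Bs t)
    then have "skok b k t" by simp
    then show ?case unfolding skok_def by (auto simp: if_distrib)
  next
    case Or
    then show ?case unfolding skok_def by auto
  next
    case (Idt x)
    then have IH: "skok b k x" by simp
    consider "Suc (dim x) \<le> k" | "k = dim x" | "k < dim x" by linarith
    then show ?case
    proof cases
      case 1 then show ?thesis using Idt.prems by (intro skok_triv) auto
    next
      case 2 then show ?thesis using Idt.prems unfolding skok_def by (auto simp: Fc_ge)
    next
      case 3 then show ?thesis using IH unfolding skok_def by auto
    qed
  next
    case (Cmp p y x)
    then have G: "good x" "good y" "dim y = dim x" "p < dim x" "\<And>b k. k < p \<Longrightarrow> Fc b k y = Fc b k x"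
      "Fc False p x = Fc True p y" by auto
    have IHx: "\<And>b. skok b k x" and IHy: "\<And>b. skok b k y" using Cmp.IH G by auto
    consider "dim x \<le> k" | "k \<le> p" | "p < k" "k < dim x" by linarith
    then show ?case
    proof cases
      case 1 then show ?thesis using Cmp.prems by (intro skok_triv) auto
    next
      case 2
      show ?thesis
      proof (cases b)
        case True
        then show ?thesis using 2 G IHx[of True] unfolding skok_def by auto
      next
        case False
        then show ?thesis using 2 G IHy[of False] unfolding skok_def by auto
      qed
    next
      case 3
      have sx: "\<And>b' k'. Fc b' k' (sk b k x) = (if k' < k then Fc b' k' x else Fc b k x)"
        "dim (sk b k x) = k" "good (sk b k x)" "Vt (sk b k x) = Fc b k x"
        using IHx[of b] 3 unfolding skok_def by (auto simp: min_def)
      have sy: "\<And>b' k'. Fc b' k' (sk b k y) = (if k' < k then Fc b' k' y else Fc b k y)"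
        "dim (sk b k y) = k" "good (sk b k y)" "Vt (sk b k y) = Fc b k y"
        using IHy[of b] 3 G(3) unfolding skok_def by (auto simp: min_def)
      have e: "sk b k (Cmp p y x) = Cmp p (sk b k y) (sk b k x)" using 3 by simp
      show ?thesis unfolding skok_def e using 3 sx sy G by (auto simp: min_def)
    qed
  next
    case (Xi x)
    then have gx: "good x" by simp
    have IHx: "\<And>b. skok b k x" using Xi.IH gx by auto
    show ?case
    proof (cases "Suc (dim x) \<le> k")
      case True then show ?thesis using Xi.prems by (intro skok_triv) auto
    next
      case nk: False
      show ?thesis
      proof (cases b)
        case True
        show ?thesis
        proof (cases "k = 0")
          case True
          then show ?thesis using \<open>b\<close> unfolding skok_def by auto
        next
          case False
          have IH': "skok False (k-1) x" using less.IH[of "k-1" x False] False gx by simp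
          have s: "\<And>b' k'. Fc b' k' (sk False (k-1) x) = (if k' < k-1 then Fc b' k' x else Fc False (k-1) x)"
            "dim (sk False (k-1) x) = k-1" "good (sk False (k-1) x)" "Vt (sk False (k-1) x) = Fc False (k-1) x"
            using IH' nk False unfolding skok_def by (auto simp: min_def)
          have e: "sk b k (Xi x) = Xi (sk False (k-1) x)" using nk False \<open>b\<close> by simp
          have mk: "min k (Suc (dim x)) = k" using nk by simp
          have fk: "Fc b k (Xi x) = insert 0 (Fc False (k-1) x)" using nk False \<open>b\<close> by simp
          have FF: "Fc b' k' (Xi (sk False (k-1) x)) = (if k' < k then Fc b' k' (Xi x) else Fc b k (Xi x))" for b' k'
          proof (cases "k \<le> k'")
            case True then show ?thesis using s(2,4) fk False by simp
          next
            case kk: False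
            show ?thesis
            proof (cases "b'")
              case True then show ?thesis using s kk nk by auto
            next
              case bF: False
              have U: "(\<Union>i<k'. Fc True i (sk False (k-1) x)) = (\<Union>i<k'. Fc True i x)"
                using s(1) kk by (intro SUP_cong) auto
              have F1: "Fc False k' (sk False (k-1) x) = Fc False k' x"
              proof (cases "k' < k - 1")
                case True then show ?thesis using s(1) by simp
              next
                case False then have "k' = k - 1" using kk by simp
                then show ?thesis using s(1) by simp
              qed
              show ?thesis using bF kk nk s(2) U F1 s(1)[of False 0] by auto
            qed
          qed
          show ?thesis unfolding skok_def e mk using s(2,3,4) fk FF False mk by auto
        qed
      next
        case False
        define z where "z = sk False k x"
        have sz: "\<And>b' k'. Fc b' k' z = (if k' < k then Fc b' k' x else Fc False k x)"
            "dim z = k" "good z" "Vt z = Fc False k x"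
          using IHx[of False] nk unfolding skok_def z_def by (auto simp: min_def)
        have e: "sk b k (Xi x) = accF z z k" using nk False unfolding accF_def z_def by (simp add: Let_def)
        have okl: "\<forall>l<k. skok True l z" using less.IH sz(3) by blast
        have FL: "good (accF z z k) \<and> dim (accF z z k) = k \<and> Vt (accF z z k) = Vt z \<union> (\<Union>l<k. insert 0 (Fc True l z))
           \<and> (\<forall>b k'. Fc b k' (accF z z k) = FA z z k k b k')"
          by (rule fold_lemma) (use sz okl in auto)
        have mk: "min k (Suc (dim x)) = k" using nk by simp
        have UNn: "(\<Union>l<k. insert (0::nat) (f l)) = (if k = 0 then {} else insert 0 (\<Union>l<k. f l))" for k and f :: "nat \<Rightarrow> nat set"
          by auto
        have Uz: "(\<Union>l<j. Fc True l z) = (\<Union>l<j. Fc True l x)" if "j \<le> k" for j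
          using sz(1) that by (intro SUP_cong) auto
        have fk: "Fc b k (Xi x) = (if k = 0 then Fc False 0 x else insert 0 (Fc False k x \<union> (\<Union>i<k. Fc True i x)))"
          using nk False by simp
        have V: "Vt (accF z z k) = Fc b k (Xi x)"
          using FL sz(4) Uz[of k] fk by (auto simp: UNn)
        have FF: "Fc b' k' (accF z z k) = (if k' < k then Fc b' k' (Xi x) else Fc b k (Xi x))" for b' k'
        proof (cases "k \<le> k'")
          case True then show ?thesis using FL V by (simp add: FA_def)
        next
          case kk: False
          then show ?thesis using FL nk sz(1) Uz[of k'] by (cases b') (auto simp: FA_def UNn min_def)
        qed
        have g1: "good (accF z z k)" "dim (accF z z k) = k" using FL by auto
        have mk2: "min k (dim (Xi x)) = k" using mk by simp
        show ?thesis unfolding skok_def e mk2 using g1 V FF by blast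
      qed
    qed
  qed
qed


lemma L1': "good t \<Longrightarrow> good (sk b k t) \<and> dim (sk b k t) = min k (dim t) \<and> Vt (sk b k t) = Fc b k t
     \<and> (\<forall>b' k'. Fc b' k' (sk b k t) = (if k' < min k (dim t) then Fc b' k' t else Fc b k t))"
  using L1 unfolding skok_def by blast

lemma sound:
  assumes bw: "\<And>x. bw x \<Longrightarrow> good x" and be: "\<And>x y. be x y \<Longrightarrow> good x \<and> good y \<and> same x y"
  shows "wfT bw be t \<Longrightarrow> good t" and "eqT bw be t u \<Longrightarrow> good t \<and> good u \<and> same t u"
proof (induction t and t u rule: wfT_eqT.inducts)
  case (wf_Bs x) then show ?case using bw by simp
next
  case wf_Or then show ?case by simp
next
  case (wf_Xi x) then show ?case by simp
next
  case (wf_Idt x) then show ?case by simp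
next
  case (wf_Cmp x y p)
  have gx: "good x" and gy: "good y" and sm: "same (sk False p x) (sk True p y)" and d: "dim x = dim y" "p < dim x"
    using wf_Cmp by auto
  have sx: "\<And>b k. Fc b k (sk False p x) = (if k < p then Fc b k x else Fc False p x)" "Vt (sk False p x) = Fc False p x"
    using L1'[OF gx, of False p] d by (auto simp: min_def)
  have sy: "\<And>b k. Fc b k (sk True p y) = (if k < p then Fc b k y else Fc True p y)" "Vt (sk True p y) = Fc True p y"
    using L1'[OF gy, of True p] d by (auto simp: min_def)
  have "Fc b k y = Fc b k x" if "k < p" for b k
    using sm sx(1)[of b k] sy(1)[of b k] that unfolding same_def by auto
  then show ?case using gx gy d sm sx(2) sy(2) unfolding same_def by auto
next
  case (wf_sk t b k) then show ?case using L1' by blast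
next
  case (eq_refl t) then show ?case by (simp add: same_def)
next
  case (eq_sym t u) then show ?case by (auto simp: same_def)
next
  case (eq_trans t u v) then show ?case by (auto simp: same_def)
next
  case (eq_Bs x y) then show ?case using be[of x y] by (auto simp: same_def)
next
  case (eq_Xi x y) then show ?case by (auto simp: same_def)
next
  case (eq_Idt x y) then show ?case by (auto simp: same_def)
next
  case (eq_Cmp x x' y y' p) then show ?case by (auto simp: same_def)
next
  case (eq_sk t u b k)
  then have g: "good t" "good u" "same t u" by auto
  show ?case using L1'[OF g(1), of b k] L1'[OF g(2), of b k] g(3) unfolding same_def by auto
next
  case (eta_Cmp p y x) then show ?case using bw[of "Cmp p y x"] unfolding same_def by (auto simp: image_Un)
next
  case (eta_Idt x) then show ?case using bw[of "Idt x"] unfolding same_def by auto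
next
  case (assoc p z y x) then show ?case unfolding same_def by auto
next
  case (unit_l p x)
  then have g: "good (Cmp p (lift (dim x - p) (sk False p x)) x)" by simp
  then have gx: "good x" and px: "p < dim x" by auto
  have s: "\<And>b k. Fc b k (sk False p x) = (if k < p then Fc b k x else Fc False p x)" "Vt (sk False p x) = Fc False p x"
    "dim (sk False p x) = p"
    using L1'[OF gx, of False p] px by (auto simp: min_def)
  have N: "\<And>b k. Fc b k x \<subseteq> Vt x" "\<And>b k b' k'. k < k' \<Longrightarrow> Fc b k x \<subseteq> Fc b' k' x"
    using nest[OF gx] by auto
  have "Fc b k (Cmp p (lift (dim x - p) (sk False p x)) x) = Fc b k x" for b k
  proof -
    consider "dim x \<le> k" | "k < p" | "k = p" | "p < k" "k < dim x" by linarith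
    then show ?thesis
    proof cases
      case 1 then show ?thesis using s N(1)[of False p] by (auto simp: Fc_ge)
    next
      case 2 then show ?thesis using s px by (cases b) auto
    next
      case 3 then show ?thesis using s px by (cases b) auto
    next
      case 4 then show ?thesis using s px N(2)[of p k False b] by auto
    qed
  qed
  moreover have "Vt (Cmp p (lift (dim x - p) (sk False p x)) x) = Vt x" using s N(1)[of False p] by auto
  ultimately show ?case using g gx s px unfolding same_def by auto
next
  case (unit_r p x)
  then have g: "good (Cmp p x (lift (dim x - p) (sk True p x)))" by simp
  then have gx: "good x" and px: "p < dim x" using L1' by auto
  have s: "\<And>b k. Fc b k (sk True p x) = (if k < p then Fc b k x else Fc True p x)" "Vt (sk True p x) = Fc True p x"
    "dim (sk True p x) = p"
    using L1'[OF gx, of True p] px by (auto simp: min_def)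
  have N: "\<And>b k. Fc b k x \<subseteq> Vt x" "\<And>b k b' k'. k < k' \<Longrightarrow> Fc b k x \<subseteq> Fc b' k' x"
    using nest[OF gx] by auto
  have dd: "dim (lift (dim x - p) (sk True p x)) = dim x" using s px by simp
  have "Fc b k (Cmp p x (lift (dim x - p) (sk True p x))) = Fc b k x" for b k
  proof -
    consider "dim x \<le> k" | "k < p" | "k = p" | "p < k" "k < dim x" by linarith
    then show ?thesis
    proof cases
      case 1 then show ?thesis using s N(1)[of True p] dd by (auto simp: Fc_ge)
    next
      case 2 then show ?thesis using s px dd by (cases b) auto
    next
      case 3 then show ?thesis using s px dd by (cases b) auto
    next
      case 4 then show ?thesis using s px dd N(2)[of p k True b] by auto
    qed
  qed
  moreover have "Vt (Cmp p x (lift (dim x - p) (sk True p x))) = Vt x" using s N(1)[of True p] by auto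
  ultimately show ?case using g gx s px dd unfolding same_def by auto
next
  case (interchange q p y' y x' x) then show ?case unfolding same_def by auto
next
  case (id_cmp p y x) then show ?case unfolding same_def by (auto simp: Fc_ge)
next
  case (xi_cmp p y x)
  then have gC: "good (Cmp p y x)" and gR: "good (XiCmpRhs p y x)" by auto
  then have gx: "good x" and gy: "good y" and dd: "dim y = dim x" and px: "p < dim x"
    and fyx: "\<And>b k. k < p \<Longrightarrow> Fc b k y = Fc b k x" and fp: "Fc False p x = Fc True p y" by auto
  define d where "d = dim x"
  define z where "z = sk False (Suc p) y"
  have sz: "\<And>b k. Fc b k z = (if k < Suc p then Fc b k y else Fc False (Suc p) y)" "Vt z = Fc False (Suc p) y"
    "dim z = Suc p" "good z"
    using L1'[OF gy, of False "Suc p"] px dd unfolding z_def by (auto simp: min_def)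
  define Fo where "Fo = accF z x p"
  have FL: "good Fo \<and> dim Fo = Suc p \<and> Vt Fo = Vt z \<union> (\<Union>l<p. insert 0 (Fc True l x))
     \<and> (\<forall>b k. Fc b k Fo = FA z x (Suc p) p b k)"
    unfolding Fo_def by (rule fold_lemma) (use sz gx px L1 fyx in auto)
  have cmp_ge: "cmp p' Y X = Cmp p' (lift (dim X - dim Y) Y) X" if "dim Y \<le> dim X" for p' Y X
    using that by (simp add: cmp_def max_def)
  define A where "A = Cmp p (lift (d - p) Fo) (Xi x)"
  have RHS: "XiCmpRhs p y x = Cmp (Suc p) A (Xi y)"
    unfolding XiCmpRhs_def A_def Fo_def[symmetric] z_def[symmetric] accF_def[symmetric]
    using FL px dd d_def by (simp add: cmp_ge cmp_le)
  have Nx: "\<And>b k. Fc b k x \<subseteq> Vt x" "\<And>b k b' k'. k < k' \<Longrightarrow> Fc b k x \<subseteq> Fc b' k' x"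
    using nest[OF gx] by auto
  have Ny: "\<And>b k. Fc b k y \<subseteq> Vt y" "\<And>b k b' k'. k < k' \<Longrightarrow> Fc b k y \<subseteq> Fc b' k' y"
    using nest[OF gy] by auto
  have UNn: "(\<Union>l<k. insert (0::nat) (f l)) = (if k = 0 then {} else insert 0 (\<Union>l<k. f l))" for k and f :: "nat \<Rightarrow> nat set"
    by auto
  have dA: "dim A = Suc d" unfolding A_def d_def by simp
  have VFo: "Vt Fo = Fc False (Suc p) y \<union> (\<Union>l<p. insert 0 (Fc True l x))" using FL sz(2) by simp
  have FFo: "\<And>b k. Fc b k Fo = FA z x (Suc p) p b k" using FL by simp
  have eA: "Fc b k A = (if Suc d \<le> k then Vt Fo \<union> insert 0 (Vt x) else if k \<le> p then (if b then Fc b k (Xi x) else Fc b k Fo) else Fc b k Fo \<union> Fc b k (Xi x))" for b k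
    unfolding A_def d_def by (simp del: Fc.simps add: Fc.simps(4))
  have VA: "Vt A = Vt Fo \<union> insert 0 (Vt x)" unfolding A_def by simp
  have eR: "Fc b k (Cmp (Suc p) A (Xi y)) = (if Suc d \<le> k then Vt A \<union> insert 0 (Vt y) else if k \<le> Suc p then (if b then Fc b k (Xi y) else Fc b k A) else Fc b k A \<union> Fc b k (Xi y))" for b k
    using dd d_def by (simp del: Fc.simps add: Fc.simps(4))
  have eL: "Fc b k (Xi (Cmp p y x)) = (if Suc d \<le> k then insert 0 (Vt y \<union> Vt x)
      else if b then (if k = 0 then {0} else insert 0 (Fc False (k - 1) (Cmp p y x)))
      else (if k = 0 then Fc False 0 (Cmp p y x) else insert 0 (Fc False k (Cmp p y x) \<union> (\<Union>i<k. Fc True i (Cmp p y x)))))" for b k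
    using d_def by (simp del: Fc.simps add: Fc.simps(5))
  have sameF: "Fc b k (Xi (Cmp p y x)) = Fc b k (Cmp (Suc p) A (Xi y))" for b k
  proof -
    consider "Suc d \<le> k" | "k \<le> p" | "k = Suc p" | "Suc p < k" "k \<le> d" by linarith
    then show ?thesis
    proof cases
      case 1
      have "Fc False (Suc p) y \<subseteq> Vt y" "(\<Union>l<p. Fc True l x) \<subseteq> Vt x" using Nx(1) Ny(1) by blast+
      then show ?thesis unfolding eL eR VA VFo using 1 by auto
    next
      case 2
      have FC: "Fc False k (Cmp p y x) = Fc False k y" "Fc False (k-1) (Cmp p y x) = Fc False (k-1) y"
        using 2 px d_def by auto
      have UC: "(\<Union>i<k. Fc True i (Cmp p y x)) = (\<Union>i<k. Fc True i x)"
        using 2 px d_def by (intro SUP_cong) auto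
      have FA2: "Fc False k Fo = Fc False k y \<union> (\<Union>l<k. insert 0 (Fc True l x))"
        unfolding FFo FA_def using 2 sz(1) by (auto simp: min_def)
      show ?thesis
      proof (cases b)
        case True then show ?thesis unfolding eL eR using 2 FC px d_def dd by auto
      next
        case False
        then have bF: "b = False" by simp
        have "Fc False k A = Fc False k Fo" unfolding eA using 2 px d_def by simp
        then show ?thesis unfolding eL eR bF using 2 FC UC FA2 px d_def by (auto simp: UNn)
      qed
    next
      case 3
      have FC: "Fc False p (Cmp p y x) = Fc False p y" using px d_def by auto
      have UC: "(\<Union>i<Suc p. Fc True i (Cmp p y x)) = (\<Union>i<Suc p. Fc True i x)"
        using px d_def by (intro SUP_cong) auto
      have FC2: "Fc False (Suc p) (Cmp p y x) = Fc False (Suc p) y \<union> Fc False (Suc p) x"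
        using px d_def dd by (auto simp: Fc_ge)
      have FA3: "Fc False (Suc p) Fo = Fc False (Suc p) y \<union> (\<Union>l<p. insert 0 (Fc True l x))"
        unfolding FFo FA_def using sz(2) by simp
      have XA: "Fc False (Suc p) (Xi x) = insert 0 (Fc False (Suc p) x \<union> (\<Union>i<Suc p. Fc True i x))"
        using px d_def by simp
      show ?thesis
      proof (cases b)
        case True then show ?thesis unfolding eL eR using 3 FC px d_def dd by auto
      next
        case False
        then have bF: "b = False" by simp
        have "Fc False k A = Fc False k Fo \<union> Fc False k (Xi x)" unfolding eA using 3 px d_def by simp
        then show ?thesis unfolding eL eR bF using 3 FC2 UC FA3 XA px d_def by (auto simp: UNn)
      qed
    next
      case 4
      have VFs: "Vt Fo \<subseteq> insert 0 (Fc False (k-1) y \<union> Fc False (k-1) x)"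
      proof -
        have "Fc False (Suc p) y \<subseteq> Fc False (k-1) y" using Ny(2)[of "Suc p" "k-1" False False] 4 by (cases "Suc p = k - 1") auto
        moreover have "Fc True l x \<subseteq> Fc False (k-1) x" if "l < p" for l using Nx(2)[of l "k-1" True False] that 4 by auto
        ultimately show ?thesis unfolding VFo by blast
      qed
      have FC: "Fc False (k-1) (Cmp p y x) = Fc False (k-1) y \<union> Fc False (k-1) x"
        using 4 px d_def by auto
      have FC2: "Fc False k (Cmp p y x) = Fc False k y \<union> Fc False k x"
        using 4 px d_def dd by (auto simp: Fc_ge)
      have UC: "(\<Union>i<k. Fc True i (Cmp p y x)) = (\<Union>i<Suc p. Fc True i x) \<union> (\<Union>i\<in>{Suc p..<k}. Fc True i y \<union> Fc True i x)"
      proof -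
        have "{..<k} = {..<Suc p} \<union> {Suc p..<k}" using 4 by auto
        then have "(\<Union>i<k. Fc True i (Cmp p y x)) = (\<Union>i<Suc p. Fc True i (Cmp p y x)) \<union> (\<Union>i\<in>{Suc p..<k}. Fc True i (Cmp p y x))"
          by (simp del: Fc.simps)
        moreover have "(\<Union>i<Suc p. Fc True i (Cmp p y x)) = (\<Union>i<Suc p. Fc True i x)"
          using px d_def by (intro SUP_cong) auto
        moreover have "(\<Union>i\<in>{Suc p..<k}. Fc True i (Cmp p y x)) = (\<Union>i\<in>{Suc p..<k}. Fc True i y \<union> Fc True i x)"
          using 4 px d_def by (intro SUP_cong) auto
        ultimately show ?thesis by (simp del: Fc.simps)
      qed
      have Ty: "Fc True i y \<subseteq> Fc False k x \<union> (\<Union>i<k. Fc True i x)" if "i < Suc p" for i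
      proof (cases "i < p")
        case True then show ?thesis using fyx[of i True] 4 that by auto
      next
        case False then have "i = p" using that by simp
        then show ?thesis using fp Nx(2)[of p k False False] 4 by auto
      qed
      have XX: "Fc False k (Xi x) = insert 0 (Fc False k x \<union> (\<Union>i<k. Fc True i x))"
        "Fc False k (Xi y) = insert 0 (Fc False k y \<union> (\<Union>i<k. Fc True i y))"
        "Fc True k (Xi x) = insert 0 (Fc False (k-1) x)" "Fc True k (Xi y) = insert 0 (Fc False (k-1) y)"
        using 4 d_def dd by auto
      have VFs2: "Vt Fo \<subseteq> insert 0 (Fc False k y \<union> Fc False k x \<union> (\<Union>i<k. Fc True i x))"
      proof -
        have "Fc False (Suc p) y \<subseteq> Fc False k y" using Ny(2)[of "Suc p" k False False] 4 by auto
        moreover have "Fc True l x \<subseteq> Fc False k x" if "l < p" for l using Nx(2)[of l k True False] that 4 by auto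
        ultimately show ?thesis unfolding VFo by blast
      qed
      have eA4: "Fc b k A = Vt Fo \<union> Fc b k (Xi x)" for b unfolding eA using 4 px d_def FFo FL sz(2) by (simp add: FA_def)
      show ?thesis
      proof (cases b)
        case True
        then have bT: "b = True" by simp
        have c: "(Suc d \<le> k) = False" "(k \<le> Suc p) = False" "(k = 0) = False" using 4 by auto
        show ?thesis unfolding bT eL eR eA4 c if_False if_True FC XX using VFs by blast
      next
        case False
        then have bF: "b = False" by simp
        have U1: "(\<Union>i<k. Fc True i y) = (\<Union>i<Suc p. Fc True i y) \<union> (\<Union>i\<in>{Suc p..<k}. Fc True i y)"
        proof -
          have "{..<k} = {..<Suc p} \<union> {Suc p..<k}" using 4 by auto
          then show ?thesis by simp
        qed
        have U2: "(\<Union>i<k. Fc True i x) = (\<Union>i<Suc p. Fc True i x) \<union> (\<Union>i\<in>{Suc p..<k}. Fc True i x)"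
        proof -
          have "{..<k} = {..<Suc p} \<union> {Suc p..<k}" using 4 by auto
          then show ?thesis by simp
        qed
        have TY: "(\<Union>i<Suc p. Fc True i y) \<subseteq> Fc False k x \<union> (\<Union>i<k. Fc True i x)" using Ty by blast
        have c: "(Suc d \<le> k) = False" "(k \<le> Suc p) = False" "(k = 0) = False" using 4 by auto
        have S: "{..<Suc p} \<subseteq> {..<k}" using 4 by auto
        have key: "\<And>(V::nat set) Y X Ux Uy Wy C. V \<subseteq> insert 0 (Y \<union> X \<union> Ux) \<Longrightarrow> Uy \<subseteq> X \<union> Ux \<union> Wy \<Longrightarrow> C = Ux \<union> Wy \<Longrightarrow> Wy \<subseteq> Uy
           \<Longrightarrow> insert 0 (Y \<union> X \<union> C) = (V \<union> insert 0 (X \<union> Ux)) \<union> insert 0 (Y \<union> Uy)" by blast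
        have C: "(\<Union>i<k. Fc True i (Cmp p y x)) = (\<Union>i<k. Fc True i x) \<union> (\<Union>i\<in>{Suc p..<k}. Fc True i y)"
          unfolding UC U2 by blast
        have Uy: "(\<Union>i<k. Fc True i y) \<subseteq> Fc False k x \<union> (\<Union>i<k. Fc True i x) \<union> (\<Union>i\<in>{Suc p..<k}. Fc True i y)"
          unfolding U1 using TY by blast
        have W: "(\<Union>i\<in>{Suc p..<k}. Fc True i y) \<subseteq> (\<Union>i<k. Fc True i y)" by auto
        have VF: "Vt Fo \<subseteq> insert 0 (Fc False k y \<union> Fc False k x \<union> (\<Union>i<k. Fc True i x))" using VFs2 by blast
        have E: "Fc False k (Xi (Cmp p y x)) = insert 0 (Fc False k y \<union> Fc False k x \<union> (\<Union>i<k. Fc True i (Cmp p y x)))"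
          unfolding eL c if_False FC2 by simp
        have E2: "Fc False k (Cmp (Suc p) A (Xi y)) = (Vt Fo \<union> insert 0 (Fc False k x \<union> (\<Union>i<k. Fc True i x))) \<union> insert 0 (Fc False k y \<union> (\<Union>i<k. Fc True i y))"
          unfolding eR eA4 c if_False XX by simp
        show ?thesis unfolding bF E E2 by (rule key[OF VF Uy C W])
      qed
    qed
  qed
  have VV: "Vt Fo \<subseteq> insert 0 (Vt y \<union> Vt x)" unfolding VFo using Nx(1) Ny(1) by blast
  have "Vt (Xi (Cmp p y x)) = Vt (Cmp (Suc p) A (Xi y))" using VV VA by auto
  moreover have "dim (Xi (Cmp p y x)) = dim (Cmp (Suc p) A (Xi y))" using dd by simp
  ultimately have "same (Xi (Cmp p y x)) (XiCmpRhs p y x)" unfolding same_def RHS using sameF by blast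
  then show ?case using gC gR by simp
next
  case (xi_id u)
  then have g: "good u" by simp
  have "Fc b k (Xi (Idt u)) = Fc b k (Xi u)" for b k
    using nest[OF g] by (auto simp: Fc_ge; blast)
  then show ?case using g unfolding same_def by simp
next
  case (xi_xi u)
  then have g: "good u" by simp
  have gX: "good (Xi u)" using g by simp
  have N1: "\<And>b k. Fc b k u \<subseteq> Vt u" "\<And>b k b' k'. k < k' \<Longrightarrow> Fc b k u \<subseteq> Fc b' k' u"
    using nest[OF g] by auto
  have N2: "\<And>b k. Fc b k (Xi u) \<subseteq> Vt (Xi u)" "\<And>b k b' k'. k < k' \<Longrightarrow> Fc b k (Xi u) \<subseteq> Fc b' k' (Xi u)"
    using nest[OF gX] by blast+
  have "Fc b k (Xi (Xi u)) = Fc b k (Xi u)" for b k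
  proof -
    consider "Suc (Suc (dim u)) \<le> k" | "k = Suc (dim u)" | "k \<le> dim u" by linarith
    then show ?thesis
    proof cases
      case 1 then show ?thesis by simp
    next
      case 2
      have "Fc False (dim u) (Xi u) = insert 0 (Vt u) \<or> Fc False (dim u) (Xi u) = Vt u"
        using N1 by (auto simp: Fc_ge)
      moreover have U: "(\<Union>i<Suc (dim u). Fc True i (Xi u)) \<subseteq> insert 0 (Vt u)" using N2(1) by (metis UN_least Vt.simps(3))
      moreover have "Fc False (Suc (dim u)) (Xi (Xi u)) = insert 0 (Fc False (Suc (dim u)) (Xi u) \<union> (\<Union>i<Suc (dim u). Fc True i (Xi u)))"
        by (simp del: Fc.simps add: Fc.simps(5)[of False "Suc (dim u)" "Xi u"])
      moreover have "Fc False (Suc (dim u)) (Xi u) = insert 0 (Vt u)" by (simp add: Fc_ge)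
      ultimately show ?thesis using 2 by (cases b) (auto simp del: Fc.simps simp add: Fc.simps(5)[of True "Suc (dim u)" "Xi u"] Fc.simps(5)[of _ "Suc (dim u)" u])
    next
      case 3
      show ?thesis
      proof (cases "k = 0")
        case True then show ?thesis using 3 by (cases b) auto
      next
        case k0: False
        show ?thesis
        proof (cases b)
          case True
          have "(\<Union>i<k-1. Fc True i u) \<subseteq> Fc False (k-1) u" using N1(2) by blast
          then show ?thesis using 3 k0 True by (cases "k - 1 = 0") auto
        next
          case False
          have a: "Fc True i (Xi u) \<subseteq> insert 0 (Fc False k u)" if "i < k" for i
          proof -
            have "i - 1 < k" using that by simp
            then show ?thesis using that N1(2)[of "i-1" k False False] 3 by auto
          qed
          have b: "(\<Union>i<k. Fc True i (Xi u)) \<subseteq> insert 0 (Fc False k u)" using a by blast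
          have e: "Fc False k (Xi (Xi u)) = insert 0 (Fc False k (Xi u) \<union> (\<Union>i<k. Fc True i (Xi u)))"
            using 3 k0 by (simp del: Fc.simps add: Fc.simps(5)[of False k "Xi u"])
          have e2: "Fc False k (Xi u) = insert 0 (Fc False k u \<union> (\<Union>i<k. Fc True i u))"
            using 3 k0 by simp
          from False have bF: "b = False" by simp
          show ?thesis unfolding bF e e2 using b by blast
        qed
      qed
    qed
  qed
  then show ?case using g unfolding same_def by simp
next
  case xi_or then show ?case by (simp add: same_def Fc.simps(3))
qed


lemma wfO_0: "wfO 0 = wfT (\<lambda>_. False) (\<lambda>_ _. False)" and eqO_0: "eqO 0 = eqT (\<lambda>_. False) (\<lambda>_ _. False)"
  and wfO_Suc: "wfO (Suc k) = wfT (wfO k) (eqO k)" and eqO_Suc: "eqO (Suc k) = eqT (wfO k) (eqO k)"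
  by (simp_all add: wfO_def eqO_def)

lemma levO: "\<exists>B E. wfO k = wfT B E \<and> eqO k = eqT B E"
  by (cases k) (auto simp: wfO_0 eqO_0 wfO_Suc eqO_Suc)

lemma levels_sound: "(\<forall>t. wfO n t \<longrightarrow> good t) \<and> (\<forall>t u. eqO n t u \<longrightarrow> good t \<and> good u \<and> same t u)"
proof (induction n)
  case 0
  show ?case unfolding wfO_0 eqO_0 using sound[of "\<lambda>_. False" "\<lambda>_ _. False"] by blast
next
  case (Suc n)
  show ?case unfolding wfO_Suc eqO_Suc using sound[of "wfO n" "eqO n"] Suc by blast
qed

lemma wfO_Or: "wfO k Or" using levO[of k] by (auto intro: wfT_eqT.intros)
lemma wfO_Xi: "wfO k t \<Longrightarrow> wfO k (Xi t)" using levO[of k] by (auto intro: wfT_eqT.intros)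
lemma wfO_Idt: "wfO k t \<Longrightarrow> wfO k (Idt t)" using levO[of k] by (auto intro: wfT_eqT.intros)
lemma eqO_refl: "wfO k t \<Longrightarrow> eqO k t t" using levO[of k] by (auto intro: wfT_eqT.intros)
lemma eqO_sym: "eqO k t u \<Longrightarrow> eqO k u t" using levO[of k] by (auto intro: wfT_eqT.intros)
lemma eqO_trans: "eqO k t u \<Longrightarrow> eqO k u v \<Longrightarrow> eqO k t v" using levO[of k] by (auto intro: wfT_eqT.intros)
lemma eqO_Xi: "eqO k t u \<Longrightarrow> eqO k (Xi t) (Xi u)" using levO[of k] by (auto intro: wfT_eqT.intros)
lemma eqO_xi_id: "wfO k u \<Longrightarrow> eqO k (Xi (Idt u)) (Idt (Xi u))" using levO[of k] by (auto intro: wfT_eqT.intros)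
lemma eqO_xi_xi: "wfO k u \<Longrightarrow> eqO k (Xi (Xi u)) (Idt (Xi u))" using levO[of k] by (auto intro: wfT_eqT.intros)
lemma eqO_xi_or: "eqO k (Xi Or) (Idt Or)" using levO[of k] by (auto intro: wfT_eqT.intros)

lemma wfO_Bs_pow: "wfO k t \<Longrightarrow> wfO (k + i) ((Bs ^^ i) t)"
  by (induction i) (auto simp: wfO_Suc intro: wfT_eqT.intros)

lemma eqO_Bs_pow: "eqO k t (Idt u) \<Longrightarrow> wfO k u \<Longrightarrow> eqO (k + i) ((Bs ^^ i) t) (Idt ((Bs ^^ i) u))"
proof (induction i)
  case 0 then show ?case by simp
next
  case (Suc i)
  have w: "wfO (k + i) ((Bs ^^ i) u)" using wfO_Bs_pow Suc by blast
  have "eqT (wfO (k+i)) (eqO (k+i)) (Bs ((Bs ^^ i) t)) (Bs (Idt ((Bs ^^ i) u)))"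
    using Suc by (auto intro: wfT_eqT.intros)
  moreover have "eqT (wfO (k+i)) (eqO (k+i)) (Bs (Idt ((Bs ^^ i) u))) (Idt (Bs ((Bs ^^ i) u)))"
    using w by (auto intro: wfT_eqT.intros wfO_Idt)
  ultimately show ?case by (auto simp: eqO_Suc intro: wfT_eqT.intros)
qed

lemma dim_Bs_pow[simp]: "dim ((Bs ^^ i) t) = dim t" by (induction i) auto
lemma Vt_Bs_pow: "Vt ((Bs ^^ i) t) = (\<lambda>x. x + i) ` Vt t" by (induction i) (auto simp: image_image)

lemma dim_sc: "dim (sc is) = length is - 1"
  by (induction "is" rule: sc.induct) auto

lemma Vt_sc: "is \<noteq> [] \<Longrightarrow> sorted is \<Longrightarrow> Vt (sc is) = set is"
proof (induction "is" rule: sc.induct)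
  case 1 then show ?case by simp
next
  case (2 i) then show ?case by (simp add: Vt_Bs_pow)
next
  case (3 i j r)
  have s: "sorted (map (\<lambda>l. l - i) (j # r))" using 3(3)
    by (auto simp: sorted_map intro: sorted_wrt_mono_rel[of _ "(\<le>)"] diff_le_mono)
  have IH: "Vt (sc (map (\<lambda>l. l - i) (j # r))) = set (map (\<lambda>l. l - i) (j # r))" using 3 s by simp
  have ge: "\<forall>l\<in>set (j#r). i \<le> l" using 3(3) by auto
  show ?case using IH ge by (auto simp: Vt_Bs_pow image_image image_iff)
qed

lemma wf_sc: "is \<noteq> [] \<Longrightarrow> \<forall>x\<in>set is. x \<le> n \<Longrightarrow> wfO n (sc is)"
proof (induction "is" arbitrary: n rule: sc.induct)
  case 1 then show ?case by simp
next
  case (2 i) then show ?case using wfO_Bs_pow[OF wfO_Or, of "n - i" i] by simp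
next
  case (3 i j r)
  have "wfO (n - i) (sc (map (\<lambda>l. l - i) (j # r)))" using 3 by (intro 3(1)) auto
  then have "wfO (n - i) (Xi (sc (map (\<lambda>l. l - i) (j # r))))" by (rule wfO_Xi)
  from wfO_Bs_pow[OF this, of i] 3(3) show ?case by simp
qed


lemma inj_sc: "inj_on (\<lambda>is. cellO n (sc is)) (SI n m)"
proof (rule inj_onI)
  fix xs ys assume xs: "xs \<in> SI n m" and ys: "ys \<in> SI n m" and e: "cellO n (sc xs) = cellO n (sc ys)"
  have ne: "xs \<noteq> []" "ys \<noteq> []" using xs ys by (auto simp: SI_def)
  have "wfO n (sc ys)" using ys ne by (intro wf_sc) (auto simp: SI_def)
  then have "sc ys \<in> cellO n (sc ys)" by (simp add: cellO_def eqO_refl)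
  then have "sc ys \<in> cellO n (sc xs)" using e by simp
  then have "eqO n (sc xs) (sc ys)" by (simp add: cellO_def)
  then have "Vt (sc xs) = Vt (sc ys)" using levels_sound[of n] by (auto simp: same_def)
  moreover have "sorted xs" "sorted ys" using xs ys by (auto simp: SI_def strict_sorted_imp_sorted)
  ultimately have "set xs = set ys" using ne Vt_sc by metis
  then show "xs = ys" using xs ys strict_sorted_equal by (auto simp: SI_def)
qed

lemma sc_mapSuc: "l \<noteq> [] \<Longrightarrow> sc (map Suc l) = Bs (sc l)"
proof (induction l rule: sc.induct)
  case (3 i j r)
  have "map (\<lambda>x. x - Suc i) (map Suc (j # r)) = map (\<lambda>l. l - i) (j # r)" by simp
  then show ?case by (simp add: comp_def)
qed auto

lemma sc_0mapSuc: "l \<noteq> [] \<Longrightarrow> sc (0 # map Suc l) = Xi (Bs (sc l))"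
proof -
  assume "l \<noteq> []"
  then obtain a r where l: "l = a # r" by (cases l) auto
  have "sc (0 # map Suc l) = Xi (sc (map Suc l))" unfolding l by simp
  then show ?thesis using sc_mapSuc \<open>l \<noteq> []\<close> by simp
qed

lemma SI_0: "SI 0 m = (if m = 0 then {[0]} else {})"
proof -
  have "xs \<in> SI 0 m \<longleftrightarrow> (m = 0 \<and> xs = [0])" for xs
  proof
    assume a: "xs \<in> SI 0 m"
    then have "set xs \<subseteq> {0}" "length xs = Suc m" "distinct xs" by (auto simp: SI_def strict_sorted_iff)
    then have "card (set xs) \<le> 1" using card_mono[of "{0::nat}" "set xs"] by simp
    then have m0: "m = 0" using \<open>distinct xs\<close> \<open>length xs = Suc m\<close> distinct_card by fastforce
    then obtain a where "xs = [a]" using \<open>length xs = Suc m\<close> by (auto simp: length_Suc_conv)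
    then show "m = 0 \<and> xs = [0]" using m0 \<open>set xs \<subseteq> {0}\<close> by auto
  qed (auto simp: SI_def)
  then show ?thesis by auto
qed


lemma pred_list: "sorted_wrt (<) xs \<Longrightarrow> \<forall>x\<in>set xs. 0 < (x::nat) \<Longrightarrow>
   xs = map Suc (map (\<lambda>x. x - 1) xs) \<and> sorted_wrt (<) (map (\<lambda>x. x - 1) xs)"
proof
  assume "\<forall>x\<in>set xs. 0 < (x::nat)"
  then show "xs = map Suc (map (\<lambda>x. x - 1) xs)" by (induction xs) auto
next
  assume a: "sorted_wrt (<) xs" "\<forall>x\<in>set xs. 0 < (x::nat)"
  show "sorted_wrt (<) (map (\<lambda>x. x - 1) xs)" unfolding sorted_wrt_map
    using a by (induction xs) auto
qed

lemma SI_Suc: "SI (Suc k) m = map Suc ` SI k m \<union> (if m = 0 then {[0]} else (\<lambda>l. 0 # map Suc l) ` SI k (m - 1))"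
proof (intro equalityI subsetI)
  fix xs assume xs: "xs \<in> SI (Suc k) m"
  then obtain a r where ar: "xs = a # r" by (cases xs) (auto simp: SI_def)
  have s: "sorted_wrt (<) xs" "length xs = Suc m" "\<forall>x\<in>set xs. x \<le> Suc k" using xs by (auto simp: SI_def)
  show "xs \<in> map Suc ` SI k m \<union> (if m = 0 then {[0]} else (\<lambda>l. 0 # map Suc l) ` SI k (m - 1))"
  proof (cases "a = 0")
    case False
    then have pos: "\<forall>x\<in>set xs. 0 < x" using s(1) ar by auto
    have "map (\<lambda>x. x - 1) xs \<in> SI k m" using pred_list[OF s(1) pos] s by (auto simp: SI_def)
    then show ?thesis using pred_list[OF s(1) pos] by blast
  next
    case True
    show ?thesis
    proof (cases "m = 0")
      case True then show ?thesis using s(2) ar \<open>a = 0\<close> by simp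
    next
      case m0: False
      have sr: "sorted_wrt (<) r" and pos: "\<forall>x\<in>set r. 0 < x" using s(1) ar True by auto
      have "map (\<lambda>x. x - 1) r \<in> SI k (m - 1)" using pred_list[OF sr pos] s ar m0 by (auto simp: SI_def)
      moreover have "xs = 0 # map Suc (map (\<lambda>x. x - 1) r)" using pred_list[OF sr pos] ar True by simp
      ultimately have "xs \<in> (\<lambda>l. 0 # map Suc l) ` SI k (m - 1)" by blast
      then show ?thesis using m0 by simp
    qed
  qed
next
  fix xs assume "xs \<in> map Suc ` SI k m \<union> (if m = 0 then {[0]} else (\<lambda>l. 0 # map Suc l) ` SI k (m - 1))"
  then show "xs \<in> SI (Suc k) m"
    by (auto simp: SI_def sorted_wrt_map split: if_splits)
qed

lemma Gen_sc: "Gen n m = sc ` SI n m"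
proof (induction n arbitrary: m)
  case 0 then show ?case by (simp add: SI_0)
next
  case (Suc k)
  have ne: "\<And>l m. l \<in> SI k m \<Longrightarrow> l \<noteq> []" by (auto simp: SI_def)
  have A: "sc ` map Suc ` SI k m = Bs ` sc ` SI k m"
    unfolding image_image using sc_mapSuc ne by (intro image_cong) auto
  have B: "sc ` (\<lambda>l. 0 # map Suc l) ` SI k (m - 1) = Xi ` Bs ` sc ` SI k (m - 1)"
    unfolding image_image using sc_0mapSuc ne by (intro image_cong) auto
  show ?case unfolding SI_Suc Gen.simps Suc image_Un using A B by auto
qed


lemma sc_00: "sc (0 # a # r) = Xi (sc (a # r))" by simp

lemma P6: "\<forall>i\<in>set rest. i \<le> n \<Longrightarrow> eqO n (sc (0 # 0 # rest)) (Idt (sc (0 # rest)))"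
proof (cases rest)
  case Nil then show ?thesis using eqO_xi_or by simp
next
  case (Cons a r)
  assume le: "\<forall>i\<in>set rest. i \<le> n"
  have w: "wfO n (sc (a # r))" using le Cons by (intro wf_sc) auto
  show ?thesis unfolding Cons sc_00 using eqO_xi_xi[OF w] by simp
qed

lemma P5: "sorted is \<Longrightarrow> \<forall>i\<in>set is. i \<le> n \<Longrightarrow> \<not> sorted_wrt (<) is \<Longrightarrow>
   \<exists>u. wfO n u \<and> Suc (dim u) = length is - 1 \<and> eqO n (sc is) (Idt u)"
proof (induction "is" arbitrary: n rule: sc.induct)
  case 1 then show ?case by simp
next
  case (2 i) then show ?case by simp
next
  case (3 i j r)
  define r' where "r' = map (\<lambda>l. l - i) (j # r)"
  have ge: "\<forall>l\<in>set (j#r). i \<le> l" using 3(2) by auto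
  have le': "\<forall>l\<in>set r'. l \<le> n - i" using 3(3) unfolding r'_def by auto
  have sr': "sorted r'" using 3(2) unfolding r'_def
    by (auto simp: sorted_map intro: sorted_wrt_mono_rel[of _ "(\<le>)"] diff_le_mono)
  have "\<exists>u'. wfO (n - i) u' \<and> Suc (dim u') = length r' \<and> eqO (n - i) (Xi (sc r')) (Idt u')"
  proof (cases "i = j")
    case True
    show ?thesis
    proof (cases r)
      case Nil
      then have "r' = [0]" unfolding r'_def using True by simp
      then show ?thesis using eqO_xi_or wfO_Or by (auto intro!: exI[of _ Or])
    next
      case (Cons a r0)
      define rr where "rr = map (\<lambda>l. l - i) r"
      have r'e: "r' = 0 # rr" unfolding r'_def rr_def using True by simp
      have rrne: "rr \<noteq> []" unfolding rr_def Cons by simp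
      then obtain b rs where rrb: "rr = b # rs" by (cases rr) auto
      have scr': "sc r' = Xi (sc rr)" unfolding r'e rrb by simp
      have w: "wfO (n - i) (sc rr)" using le' rrne unfolding r'e by (intro wf_sc) auto
      have "eqO (n - i) (Xi (sc r')) (Idt (Xi (sc rr)))" unfolding scr' using eqO_xi_xi[OF w] .
      moreover have "Suc (dim (Xi (sc rr))) = length r'" using rrne unfolding r'e by (simp add: dim_sc)
      ultimately show ?thesis using wfO_Xi[OF w] by blast
    qed
  next
    case False
    then have ij: "i < j" using 3(2) by simp
    have ns: "\<not> sorted_wrt (<) (j # r)"
    proof
      assume a: "sorted_wrt (<) (j # r)"
      then have "\<forall>x\<in>set r. j < x" by simp
      then have "\<forall>x\<in>set (j#r). i < x" using ij by (metis less_trans set_ConsD)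
      then show False using 3(4) a by simp
    qed
    have ns': "\<not> sorted_wrt (<) r'"
    proof
      assume "sorted_wrt (<) r'"
      then have "sorted_wrt (\<lambda>x y. x - i < y - i) (j # r)" unfolding r'_def sorted_wrt_map .
      then have "sorted_wrt (<) (j # r)"
        by (rule sorted_wrt_mono_rel[of "j#r" "\<lambda>x y. x - i < y - i", rotated]) (use ge in auto)
      then show False using ns by simp
    qed
    obtain u'' where u'': "wfO (n - i) u''" "Suc (dim u'') = length r' - 1" "eqO (n - i) (sc r') (Idt u'')"
      using 3(1)[of "n - i"] sr' le' ns' unfolding r'_def by blast
    have "eqO (n - i) (Xi (sc r')) (Idt (Xi u''))"
      using eqO_trans[OF eqO_Xi[OF u''(3)] eqO_xi_id[OF u''(1)]] .
    moreover have "Suc (dim (Xi u'')) = length r'" using u''(2) unfolding r'_def by simp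
    ultimately show ?thesis using wfO_Xi[OF u''(1)] by blast
  qed
  then obtain u' where u': "wfO (n - i) u'" "Suc (dim u') = length r'" "eqO (n - i) (Xi (sc r')) (Idt u')" by blast
  have iln: "i \<le> n" using 3(3) by simp
  have "eqO (n - i + i) ((Bs ^^ i) (Xi (sc r'))) (Idt ((Bs ^^ i) u'))" by (rule eqO_Bs_pow[OF u'(3) u'(1)])
  moreover have "wfO (n - i + i) ((Bs ^^ i) u')" by (rule wfO_Bs_pow[OF u'(1)])
  ultimately show ?case using u'(2) iln unfolding r'_def by (intro exI[of _ "(Bs ^^ i) u'"]) simp
qed



lemma bij_map: "bij_betw (\<lambda>f. map f [0..<Suc m]) {f \<in> {0..m} \<rightarrow>\<^sub>E {0..n}. strict_mono_on {0..m} f} (SI n m)"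
proof (rule bij_betw_imageI)
  show "inj_on (\<lambda>f. map f [0..<Suc m]) {f \<in> {0..m} \<rightarrow>\<^sub>E {0..n}. strict_mono_on {0..m} f}"
  proof (rule inj_onI)
    fix f g assume f: "f \<in> {f \<in> {0..m} \<rightarrow>\<^sub>E {0..n}. strict_mono_on {0..m} f}"
      and g: "g \<in> {f \<in> {0..m} \<rightarrow>\<^sub>E {0..n}. strict_mono_on {0..m} f}"
      and e: "map f [0..<Suc m] = map g [0..<Suc m]"
    have "\<And>i. i \<in> {0..m} \<Longrightarrow> f i = g i" using e by (auto simp: map_eq_conv simp del: upt_Suc)
    then show "f = g" using f g by (intro PiE_ext[of f "{0..m}" "\<lambda>_. {0..n}"]) auto
  qed
next
  show "(\<lambda>f. map f [0..<Suc m]) ` {f \<in> {0..m} \<rightarrow>\<^sub>E {0..n}. strict_mono_on {0..m} f} = SI n m"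
  proof (intro equalityI subsetI)
    fix xs assume "xs \<in> (\<lambda>f. map f [0..<Suc m]) ` {f \<in> {0..m} \<rightarrow>\<^sub>E {0..n}. strict_mono_on {0..m} f}"
    then obtain f where f: "f \<in> {0..m} \<rightarrow>\<^sub>E {0..n}" "strict_mono_on {0..m} f" and xs: "xs = map f [0..<Suc m]" by auto
    have "sorted_wrt (<) xs" unfolding xs sorted_wrt_map
      by (rule sorted_wrt_mono_rel[OF _ sorted_wrt_upt]) (use f(2) in \<open>auto intro: strict_mono_onD[of "{0..m}" f] simp del: upt_Suc\<close>)
    moreover have "\<forall>i\<in>set xs. i \<le> n" using f(1) unfolding xs by (auto simp: PiE_iff simp del: upt_Suc)
    ultimately show "xs \<in> SI n m" unfolding SI_def using xs by simp
  next
    fix xs assume xs: "xs \<in> SI n m"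
    define f where "f = (\<lambda>i. if i \<in> {0..m} then xs ! i else undefined)"
    have l: "length xs = Suc m" and s: "sorted_wrt (<) xs" and b: "\<forall>i\<in>set xs. i \<le> n" using xs by (auto simp: SI_def)
    have "f \<in> {0..m} \<rightarrow>\<^sub>E {0..n}" unfolding f_def PiE_iff extensional_def using l b by auto
    moreover have "strict_mono_on {0..m} f" unfolding f_def using l s
      by (intro strict_mono_onI) (auto intro: sorted_wrt_nth_less)
    moreover have "map f [0..<Suc m] = xs" unfolding f_def using l
      by (intro nth_equalityI) (auto simp del: upt_Suc)
    ultimately show "xs \<in> (\<lambda>f. map f [0..<Suc m]) ` {f \<in> {0..m} \<rightarrow>\<^sub>E {0..n}. strict_mono_on {0..m} f}"
      by (intro image_eqI[of _ _ f]) auto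
  qed
qed

theorem mainTheorem7:
  fixes n m :: nat
  shows "(\<forall>is \<in> SI n m. wfO n (sc is) \<and> dim (sc is) = m)
    \<and> cellO n ` Gen n m = (\<lambda>is. cellO n (sc is)) ` SI n m
    \<and> inj_on (\<lambda>is. cellO n (sc is)) (SI n m)
    \<and> bij_betw (\<lambda>f. cellO n (sc (map f [0..<Suc m])))
         {f \<in> {0..m} \<rightarrow>\<^sub>E {0..n}. strict_mono_on {0..m} f} (cellO n ` Gen n m)
    \<and> (\<forall>is. length is = Suc m \<and> sorted is \<and> (\<forall>i\<in>set is. i \<le> n) \<and> \<not> sorted_wrt (<) is
         \<longrightarrow> (\<exists>u. wfO n u \<and> Suc (dim u) = m \<and> eqO n (sc is) (Idt u)))
    \<and> (\<forall>rest. length rest + 1 = m \<and> sorted rest \<and> (\<forall>i\<in>set rest. i \<le> n)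
         \<longrightarrow> eqO n (sc (0 # 0 # rest)) (Idt (sc (0 # rest))))"
proof -
  have A: "\<forall>is \<in> SI n m. wfO n (sc is) \<and> dim (sc is) = m"
  proof
    fix xs assume xs: "xs \<in> SI n m"
    then have "xs \<noteq> []" "length xs = Suc m" "\<forall>i\<in>set xs. i \<le> n" by (auto simp: SI_def)
    then show "wfO n (sc xs) \<and> dim (sc xs) = m" using wf_sc dim_sc by simp
  qed
  have G: "cellO n ` Gen n m = (\<lambda>is. cellO n (sc is)) ` SI n m"
    unfolding Gen_sc image_image ..
  have I: "inj_on (\<lambda>is. cellO n (sc is)) (SI n m)" by (rule inj_sc)
  have B0: "bij_betw (\<lambda>is. cellO n (sc is)) (SI n m) (cellO n ` Gen n m)"
    using I G by (simp add: bij_betw_def)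
  have B: "bij_betw (\<lambda>f. cellO n (sc (map f [0..<Suc m])))
         {f \<in> {0..m} \<rightarrow>\<^sub>E {0..n}. strict_mono_on {0..m} f} (cellO n ` Gen n m)"
    using bij_betw_trans[OF bij_map B0] by (simp add: comp_def)
  have C: "\<forall>is. length is = Suc m \<and> sorted is \<and> (\<forall>i\<in>set is. i \<le> n) \<and> \<not> sorted_wrt (<) is
         \<longrightarrow> (\<exists>u. wfO n u \<and> Suc (dim u) = m \<and> eqO n (sc is) (Idt u))"
    using P5 by fastforce
  have D: "\<forall>rest. length rest + 1 = m \<and> sorted rest \<and> (\<forall>i\<in>set rest. i \<le> n)
         \<longrightarrow> eqO n (sc (0 # 0 # rest)) (Idt (sc (0 # rest)))"
    using P6 by blast
  show ?thesis using A G I B C D by blast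
qed

end
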